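(* Let $\{c_n\}_{n\ge1}$ be a real sequence with $\sum_{n=1}^\infty |c_n|<+\infty$ and $\sum_{n=N}^{\infty}(c_n)^2>0$ for every $N\ge1$. Let $f(x):=\sum_{n=1}^\infty c_n\varphi^{(n)}(x)$ and $f_N(x):=\sum_{n=1}^{N-1}c_n\varphi^{(n)}(x)$ for $x\in[0,1]$. If $$\lim_{N\to\infty}\frac{(c_N)^2}{\sum_{n=N}^\infty (c_n)^2}=0,$$ then for every $u\in\mathbb{R}$, $$\lim_{N\to\infty}P\left(\left\{x\in[0,1]:\frac{f(x)-f_N(x)-\frac12\sum_{n=N}^\infty c_n}{\sqrt{\frac1{12}\sum_{n=N}^\infty (c_n)^2}}\le u\right\}\right)=\int_{-\infty}^u\frac{1}{\sqrt{2\pi}}e^{-t^2/2}\,dt.$$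
   Context: The tent map on $[0,1]$ is $\varphi(x)=2x$ for $x\in[0,1/2]$ and $\varphi(x)=2(1-x)$ for $x\in[1/2,1]$; it is extended to $\mathbb{R}$ by $\varphi(x):=\varphi(x-[x])$, and $\varphi^{(n)}$ denotes the $n$-fold iterate of $\varphi$, so that $\varphi^{(n)}(x)=\varphi(2^{n-1}x)$. $P$ denotes Lebesgue measure on $[0,1]$. *)

theory Defs
  imports "HOL-Analysis.Analysis"
begin

definition tent :: "real \<Rightarrow> real" where
  "tent x = (let y = x - of_int \<lfloor>x\<rfloor> in if y \<le> 1/2 then 2 * y else 2 * (1 - y))"

definition tent_iter :: "nat \<Rightarrow> real \<Rightarrow> real" where
  "tent_iter n = (tent ^^ n)"

end

theory Submission
  imports Defs "HOL-Probability.Probability"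
begin
lemma tent_arccos: "tent x = arccos (cos (2*pi*x)) / pi"
proof -
  define y where "y = x - of_int \<lfloor>x\<rfloor>"
  have y01: "0 \<le> y" "y < 1" unfolding y_def by linarith+
  have cy: "cos (2*pi*x) = cos (2*pi*y)"
  proof -
    have "2*pi*x = 2*pi*y + (2*pi) * of_int \<lfloor>x\<rfloor>" unfolding y_def by (simp add: algebra_simps)
    then show ?thesis by (simp add: cos_add)
  qed
  show ?thesis
  proof (cases "y \<le> 1/2")
    case True
    have "arccos (cos (2*pi*y)) = 2*pi*y"
      using True y01 by (intro arccos_cos) auto
    then show ?thesis using True unfolding tent_def Let_def y_def[symmetric] cy by simp
  next
    case False
    have "cos (2*pi*y) = cos (2*pi*(1-y))"
      by (simp add: algebra_simps cos_diff)
    moreover have "arccos (cos (2*pi*(1-y))) = 2*pi*(1-y)"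
      using False y01 by (intro arccos_cos) auto
    ultimately show ?thesis using False unfolding tent_def Let_def y_def[symmetric] cy by simp
  qed
qed

lemma tent_cont: "continuous_on UNIV tent"
proof -
  have "continuous_on UNIV (\<lambda>x. arccos (cos (2*pi*x)) / pi)"
    by (intro continuous_intros continuous_on_compose2[OF continuous_on_arccos]) auto
  then show ?thesis by (simp add: tent_arccos[abs_def])
qed

lemma tent_isCont: "isCont tent x"
  using tent_cont by (simp add: continuous_on_eq_continuous_at)

lemma tent_period_int: "tent (x + of_int m) = tent x"
proof -
  have "cos (2*pi*(x + of_int m)) = cos (2*pi*x)"
  proof -
    have "2*pi*(x + of_int m) = 2*pi*x + (2*pi) * of_int m" by (simp add: algebra_simps)
    then show ?thesis by (simp add: cos_add)
  qed
  then show ?thesis by (simp add: tent_arccos)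
qed

lemma tent_period_nat: "tent (x + of_nat m) = tent x"
  using tent_period_int[of x "int m"] by simp

lemma tent_period1: "tent (x + 1) = tent x"
  using tent_period_nat[of x 1] by simp

lemma tent_tent: "tent (tent x) = tent (2*x)"
proof -
  have "cos (2*pi*tent x) = cos (2 * arccos (cos (2*pi*x)))"
    by (simp add: tent_arccos)
  also have "\<dots> = 2 * (cos (2*pi*x))^2 - 1"
    by (simp add: cos_double_cos)
  also have "\<dots> = cos (2*pi*(2*x))"
    using cos_double_cos[of "2*pi*x"] by (simp add: algebra_simps)
  finally show ?thesis by (simp add: tent_arccos)
qed

lemma tent_iter_eq: "tent_iter (Suc n) x = tent (2^n * x)"
proof (induction n)
  case 0 then show ?case by (simp add: tent_iter_def)
next
  case (Suc n)
  have "tent_iter (Suc (Suc n)) x = tent (tent_iter (Suc n) x)"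
    by (simp add: tent_iter_def)
  also have "\<dots> = tent (2 * (2^n * x))" using Suc by (simp add: tent_tent)
  finally show ?case by (simp add: algebra_simps)
qed

lemma tent_01: "x \<in> {0..1} \<Longrightarrow> tent x = (if x \<le> 1/2 then 2*x else 2 - 2*x)"
proof -
  assume x: "x \<in> {0..1}"
  show ?thesis
  proof (cases "x = 1")
    case True then show ?thesis by (simp add: tent_def)
  next
    case False
    then have "\<lfloor>x\<rfloor> = 0" using x by (intro floor_unique) auto
    then show ?thesis by (simp add: tent_def)
  qed
qed

lemma tent_bounds: "0 \<le> tent x" "tent x \<le> 1"
  unfolding tent_def Let_def by (auto simp: algebra_simps, linarith+)

lemma half_split:
  fixes f g P :: "real \<Rightarrow> 'a::banach"
  assumes cf: "continuous_on {0..1} f" and cg: "continuous_on {0..1} g"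
    and P1: "\<And>z. z \<in> {0..1/2} \<Longrightarrow> P z = f (2*z)"
    and P2: "\<And>z. z \<in> {1/2..1} \<Longrightarrow> P z = g (2*z-1)"
  shows "(P has_integral ((1/2) *\<^sub>R (integral {0..1} f + integral {0..1} g))) {0..1}"
proof -
  have f: "(f has_integral integral {0..1} f) (cbox 0 1)"
    using integrable_continuous_interval[OF cf] by (simp add: has_integral_integral)
  have g: "(g has_integral integral {0..1} g) (cbox 0 1)"
    using integrable_continuous_interval[OF cg] by (simp add: has_integral_integral)
  have "((\<lambda>x. f (2 *\<^sub>R x + 0)) has_integral (integral {0..1} f /\<^sub>R 2 ^ DIM(real)))
           (cbox ((0 - 0) /\<^sub>R 2) ((1 - 0) /\<^sub>R 2))"
    by (rule has_integral_affinity'[OF f]) simp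
  then have f2: "((\<lambda>x. f (2*x)) has_integral ((1/2) *\<^sub>R integral {0..1} f)) {0..1/2}"
    by simp
  have "((\<lambda>x. g (2 *\<^sub>R x + (-1))) has_integral (integral {0..1} g /\<^sub>R 2 ^ DIM(real)))
           (cbox ((0 - (-1)) /\<^sub>R 2) ((1 - (-1)) /\<^sub>R 2))"
    by (rule has_integral_affinity'[OF g]) simp
  then have g2: "((\<lambda>x. g (2*x-1)) has_integral ((1/2) *\<^sub>R integral {0..1} g)) {1/2..1}"
    by simp
  have a: "(P has_integral ((1/2) *\<^sub>R integral {0..1} f)) {0..1/2}"
    using f2 by (rule has_integral_eq[rotated]) (simp add: P1)
  have b: "(P has_integral ((1/2) *\<^sub>R integral {0..1} g)) {1/2..1}"
    using g2 by (rule has_integral_eq[rotated]) (simp add: P2)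
  have "(P has_integral ((1/2) *\<^sub>R integral {0..1} f + (1/2) *\<^sub>R integral {0..1} g)) {0..1}"
    by (rule has_integral_combine[OF _ _ a b]) auto
  then show ?thesis by (simp add: scaleR_add_right)
qed

definition periodic1 :: "(real \<Rightarrow> 'a) \<Rightarrow> bool" where
  "periodic1 G \<longleftrightarrow> (\<forall>x. G (x + 1) = G x)"

lemma periodic1_nat: "periodic1 G \<Longrightarrow> G (x + of_nat m) = G x"
proof (induction m arbitrary: x)
  case 0 then show ?case by simp
next
  case (Suc m)
  have "G (x + of_nat (Suc m)) = G ((x + of_nat m) + 1)" by (simp add: algebra_simps)
  also have "\<dots> = G (x + of_nat m)" using Suc.prems by (simp add: periodic1_def)
  finally show ?case using Suc by simp
qed

lemma double_int:
  fixes h G :: "real \<Rightarrow> 'a::{real_normed_algebra, banach}"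
  assumes ch: "continuous_on {0..1} h" and cG: "continuous_on UNIV G" and pG: "periodic1 G"
  shows "integral {0..1} (\<lambda>z. h z * G (2*z))
       = integral {0..1} (\<lambda>w. ((1/2) *\<^sub>R (h (w/2) + h ((w+1)/2))) * G w)"
proof -
  have c1: "continuous_on {0..1} (\<lambda>w. h (w/2))"
    by (rule continuous_on_compose2[OF ch]) (auto intro!: continuous_intros)
  have c2: "continuous_on {0..1} (\<lambda>w. h ((w+1)/2))"
    by (rule continuous_on_compose2[OF ch]) (auto intro!: continuous_intros)
  have cG': "continuous_on {0..1} G" using cG by (rule continuous_on_subset) auto
  have cf: "continuous_on {0..1} (\<lambda>w. h (w/2) * G w)" by (intro continuous_intros c1 cG')
  have cg: "continuous_on {0..1} (\<lambda>w. h ((w+1)/2) * G w)" by (intro continuous_intros c2 cG')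
  have "((\<lambda>z. h z * G (2*z)) has_integral
      ((1/2) *\<^sub>R (integral {0..1} (\<lambda>w. h (w/2) * G w) + integral {0..1} (\<lambda>w. h ((w+1)/2) * G w)))) {0..1}"
  proof (rule half_split[OF cf cg])
    fix z :: real assume "z \<in> {1/2..1}"
    have "G (2*z) = G (2*z - 1)" using pG unfolding periodic1_def by (metis diff_add_cancel)
    then show "h z * G (2*z) = h ((2*z-1+1)/2) * G (2*z-1)" by simp
  qed simp
  moreover have "integral {0..1} (\<lambda>w. ((1/2) *\<^sub>R (h (w/2) + h ((w+1)/2))) * G w)
     = (1/2) *\<^sub>R (integral {0..1} (\<lambda>w. h (w/2) * G w) + integral {0..1} (\<lambda>w. h ((w+1)/2) * G w))"
  proof -
    have "integral {0..1} (\<lambda>w. ((1/2) *\<^sub>R (h (w/2) + h ((w+1)/2))) * G w)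
       = integral {0..1} (\<lambda>w. (1/2) *\<^sub>R (h (w/2) * G w + h ((w+1)/2) * G w))"
      by (simp add: algebra_simps)
    also have "\<dots> = (1/2) *\<^sub>R integral {0..1} (\<lambda>w. h (w/2) * G w + h ((w+1)/2) * G w)"
      by (rule integral_cmul)
    also have "\<dots> = (1/2) *\<^sub>R (integral {0..1} (\<lambda>w. h (w/2) * G w) + integral {0..1} (\<lambda>w. h ((w+1)/2) * G w))"
      using integrable_continuous_interval[OF cf] integrable_continuous_interval[OF cg]
      by (simp add: integral_add)
    finally show ?thesis .
  qed
  ultimately show ?thesis by (simp add: integral_unique)
qed

lemma periodic1_scale: assumes "periodic1 G" shows "periodic1 (\<lambda>w. G (2^n * w))"
proof -
  have "G (2^n * (x+1)) = G (2^n * x)" for x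
  proof -
    have "G (2^n * x + of_nat (2^n)) = G (2^n * x)" using assms by (rule periodic1_nat)
    then show ?thesis by (simp add: algebra_simps)
  qed
  then show ?thesis unfolding periodic1_def by blast
qed

lemma inv_int:
  fixes G :: "real \<Rightarrow> 'a::{real_normed_algebra_1, banach}"
  assumes cG: "continuous_on UNIV G" and pG: "periodic1 G"
  shows "integral {0..1} (\<lambda>z. G (2^n * z)) = integral {0..1} G"
  using cG pG
proof (induction n arbitrary: G)
  case 0 then show ?case by simp
next
  case (Suc n)
  define G2 where "G2 = (\<lambda>w. G (2 * w))"
  have cG2: "continuous_on UNIV G2" unfolding G2_def
    by (rule continuous_on_compose2[OF Suc.prems(1)]) (auto intro!: continuous_intros)
  have pG2: "periodic1 G2" using periodic1_scale[OF Suc.prems(2), of 1] unfolding G2_def by simp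
  have "integral {0..1} (\<lambda>z. G (2^Suc n * z)) = integral {0..1} (\<lambda>z. G2 (2^n * z))"
    by (simp add: G2_def mult.assoc)
  also have "\<dots> = integral {0..1} G2" by (rule Suc.IH[OF cG2 pG2])
  also have "\<dots> = integral {0..1} (\<lambda>z. 1 * G (2*z))" by (simp add: G2_def)
  also have "\<dots> = integral {0..1} (\<lambda>w. ((1/2) *\<^sub>R (1 + 1)) * G w)"
    using double_int[of "\<lambda>z. 1" G] Suc.prems by simp
  also have "\<dots> = integral {0..1} G"
  proof -
    have e: "(1/2::real) *\<^sub>R (1 + 1 :: 'a) = 1" by (subst scaleR_2[symmetric]) simp
    show ?thesis unfolding e by simp
  qed
  finally show ?case .
qed

definition rho :: "real \<Rightarrow> real" where "rho y = 1 - 2 * tent y"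
definition qf :: "real \<Rightarrow> real" where "qf y = 3 * (rho y)^2 - 1"

lemma rho_cont: "continuous_on UNIV rho"
  unfolding rho_def by (intro continuous_intros tent_cont)

lemma rho_bound: "\<bar>rho y\<bar> \<le> 1"
  using tent_bounds[of y] unfolding rho_def by auto

lemma rho_period: "periodic1 rho"
  unfolding periodic1_def rho_def by (simp add: tent_period1)

lemma rho_01: "x \<in> {0..1} \<Longrightarrow> rho x = (if x \<le> 1/2 then 1 - 4*x else 4*x - 3)"
  unfolding rho_def by (simp add: tent_01)

lemma rho_sum: "w \<in> {0..1} \<Longrightarrow> rho (w/2) + rho ((w+1)/2) = 0"
  by (subst rho_01, simp, subst rho_01, auto simp: field_simps)

lemma rho_lip: "x \<in> {0..1} \<Longrightarrow> y \<in> {0..1} \<Longrightarrow> \<bar>rho x - rho y\<bar> \<le> 4 * \<bar>x - y\<bar>"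
  by (auto simp add: rho_01 abs_if)

lemma qf_cont: "continuous_on UNIV qf"
  unfolding qf_def by (intro continuous_intros rho_cont)

lemma qf_period: "periodic1 qf"
  using rho_period unfolding periodic1_def qf_def by simp

lemma qf_bound: "\<bar>qf y\<bar> \<le> 2"
proof -
  have "(rho y)^2 \<le> 1" using rho_bound[of y] by (simp add: abs_square_le_1)
  moreover have "0 \<le> (rho y)^2" by simp
  ultimately show ?thesis unfolding qf_def abs_le_iff by linarith
qed

lemma qf_lip: assumes "x \<in> {0..1}" "y \<in> {0..1}" shows "\<bar>qf x - qf y\<bar> \<le> 24 * \<bar>x - y\<bar>"
proof -
  have "qf x - qf y = 3 * ((rho x - rho y) * (rho x + rho y))"
    unfolding qf_def by (simp add: power2_eq_square algebra_simps)
  then have "\<bar>qf x - qf y\<bar> = 3 * (\<bar>rho x - rho y\<bar> * \<bar>rho x + rho y\<bar>)"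
    by (simp add: abs_mult)
  also have "\<dots> \<le> 3 * (4 * \<bar>x - y\<bar> * 2)"
    using rho_lip[OF assms] rho_bound[of x] rho_bound[of y]
    by (intro mult_left_mono mult_mono) auto
  finally show ?thesis by simp
qed

lemma qf_int: "integral {0..1} qf = 0"
proof -
  define f where "f = (\<lambda>w::real. 3 * (1 - 2*w)^2 - 1)"
  have F: "(f has_integral ((\<lambda>w. 2*w - 6*w^2 + 4*w^3) 1 - (\<lambda>w. 2*w - 6*w^2 + 4*w^3) 0)) {0..1}"
    unfolding f_def
    by (rule fundamental_theorem_of_calculus)
       (auto intro!: derivative_eq_intros simp: has_real_derivative_iff_has_vector_derivative[symmetric] power2_eq_square algebra_simps)
  have cf: "continuous_on {0..1} f" unfolding f_def by (intro continuous_intros)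
  have "(qf has_integral ((1/2) *\<^sub>R (integral {0..1} f + integral {0..1} f))) {0..1}"
    by (rule half_split[OF cf cf]) (auto simp: qf_def rho_01 f_def algebra_simps power2_eq_square)
  moreover have "integral {0..1} f = 0" using F by (simp add: integral_unique)
  ultimately show ?thesis by (simp add: integral_unique)
qed

lemma lip_decay:
  fixes h G :: "real \<Rightarrow> real"
  assumes "continuous_on {0..1} h"
    and "\<And>x y. x \<in> {0..1} \<Longrightarrow> y \<in> {0..1} \<Longrightarrow> \<bar>h x - h y\<bar> \<le> L * \<bar>x - y\<bar>"
    and "0 \<le> L"
    and cG: "continuous_on UNIV G" and pG: "periodic1 G" and iG: "integral {0..1} G = 0"
    and bG: "\<And>x. \<bar>G x\<bar> \<le> B"
  shows "\<bar>integral {0..1} (\<lambda>v. h v * G (2^p * v))\<bar> \<le> L * B / 2^p"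
  using assms(1-3)
proof (induction p arbitrary: h L)
  case 0
  have cG': "continuous_on {0..1} G" using cG by (rule continuous_on_subset) auto
  have i1: "(\<lambda>v. (h v - h 0) * G v) integrable_on {0..1}"
    by (intro integrable_continuous_interval continuous_intros 0(1) cG')
  have i2: "(\<lambda>v. h 0 * G v) integrable_on {0..1}"
    by (intro integrable_continuous_interval continuous_intros cG')
  have "integral {0..1} (\<lambda>v. h v * G (2^0 * v)) = integral {0..1} (\<lambda>v. (h v - h 0) * G v + h 0 * G v)"
    by (simp add: algebra_simps)
  also have "\<dots> = integral {0..1} (\<lambda>v. (h v - h 0) * G v)"
    using i1 i2 iG by (simp add: integral_add integral_mult[symmetric])
  finally have e: "integral {0..1} (\<lambda>v. h v * G (2^0 * v)) = integral {0..1} (\<lambda>v. (h v - h 0) * G v)" .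
  have bnd: "norm ((h v - h 0) * G v) \<le> L * B" if v: "v \<in> {0..1}" for v
  proof -
    have "\<bar>h v - h 0\<bar> \<le> L" using 0(2)[of v 0] v 0(3) by (auto intro: order_trans mult_left_le)
    then show "norm ((h v - h 0) * G v) \<le> L * B"
      unfolding real_norm_def abs_mult by (intro mult_mono bG) (auto simp: order_trans[OF abs_ge_zero bG])
  qed
  have "norm (integral {0..1} (\<lambda>v. (h v - h 0) * G v)) \<le> integral {0..1} (\<lambda>v::real. L * B)"
    by (rule integral_norm_bound_integral[OF i1 _ bnd]) (simp_all add: integrable_continuous_interval)
  then show ?case using e by simp
next
  case (Suc p)
  define G2 where "G2 = (\<lambda>w. G (2^p * w))"
  have cG2: "continuous_on UNIV G2" unfolding G2_def
    by (rule continuous_on_compose2[OF cG]) (auto intro!: continuous_intros)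
  have pG2: "periodic1 G2" unfolding G2_def by (rule periodic1_scale[OF pG])
  define h' where "h' = (\<lambda>w. (1/2) *\<^sub>R (h (w/2) + h ((w+1)/2)))"
  have ch': "continuous_on {0..1} h'"
  proof -
    have c1: "continuous_on {0..1} (\<lambda>w. h (w/2))"
      by (rule continuous_on_compose2[OF Suc.prems(1)]) (auto intro!: continuous_intros)
    have c2: "continuous_on {0..1} (\<lambda>w. h ((w+1)/2))"
      by (rule continuous_on_compose2[OF Suc.prems(1)]) (auto intro!: continuous_intros)
    show ?thesis unfolding h'_def by (intro continuous_intros c1 c2)
  qed
  have lh': "\<bar>h' x - h' y\<bar> \<le> (L/2) * \<bar>x - y\<bar>" if "x \<in> {0..1}" "y \<in> {0..1}" for x y
  proof -
    have a: "\<bar>h (x/2) - h (y/2)\<bar> \<le> L * \<bar>x/2 - y/2\<bar>" using that by (intro Suc.prems(2)) auto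
    have b: "\<bar>h ((x+1)/2) - h ((y+1)/2)\<bar> \<le> L * \<bar>(x+1)/2 - (y+1)/2\<bar>" using that by (intro Suc.prems(2)) auto
    have eq: "h' x - h' y = (1/2) * ((h (x/2) - h (y/2)) + (h ((x+1)/2) - h ((y+1)/2)))"
      unfolding h'_def by (simp add: algebra_simps)
    have "\<bar>h' x - h' y\<bar> \<le> (1/2) * (\<bar>h (x/2) - h (y/2)\<bar> + \<bar>h ((x+1)/2) - h ((y+1)/2)\<bar>)"
      unfolding eq abs_mult using abs_triangle_ineq[of "h (x/2) - h (y/2)" "h ((x+1)/2) - h ((y+1)/2)"] by simp
    also have "\<dots> \<le> (1/2) * (L * \<bar>x/2 - y/2\<bar> + L * \<bar>(x+1)/2 - (y+1)/2\<bar>)"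
      using a b by simp
    also have "\<dots> = (L/2) * \<bar>x - y\<bar>" by (simp add: abs_minus_commute algebra_simps abs_divide[symmetric] diff_divide_distrib[symmetric])
    finally show ?thesis .
  qed
  have "integral {0..1} (\<lambda>v. h v * G (2^Suc p * v)) = integral {0..1} (\<lambda>v. h v * G2 (2 * v))"
    by (simp add: G2_def mult.assoc mult.left_commute)
  also have "\<dots> = integral {0..1} (\<lambda>w. h' w * G2 w)"
    unfolding h'_def by (rule double_int[OF Suc.prems(1) cG2 pG2])
  finally have e: "integral {0..1} (\<lambda>v. h v * G (2^Suc p * v)) = integral {0..1} (\<lambda>w. h' w * G (2^p * w))"
    by (simp add: G2_def)
  have "\<bar>integral {0..1} (\<lambda>w. h' w * G (2^p * w))\<bar> \<le> (L/2) * B / 2^p"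
    by (rule Suc.IH[OF ch' lh']) (use Suc.prems(3) in auto)
  then show ?case using e by simp
qed

lemma qf_cov:
  assumes "j \<le> k"
  shows "\<bar>integral {0..1} (\<lambda>z. qf (2^j * z) * qf (2^k * z))\<bar> \<le> 48 / 2^(k-j)"
proof -
  define H where "H = (\<lambda>w. qf w * qf (2^(k-j) * w))"
  have cH: "continuous_on UNIV H" unfolding H_def
    by (intro continuous_intros continuous_on_compose2[OF qf_cont] qf_cont) auto
  have pH: "periodic1 H" using qf_period periodic1_scale[OF qf_period, of "k-j"]
    unfolding H_def periodic1_def by simp
  have "integral {0..1} (\<lambda>z. qf (2^j * z) * qf (2^k * z)) = integral {0..1} (\<lambda>z. H (2^j * z))"
  proof -
    have "(2::real)^k = 2^(k-j) * 2^j" using assms by (simp add: power_add[symmetric])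
    then show ?thesis unfolding H_def by (simp add: mult.assoc)
  qed
  also have "\<dots> = integral {0..1} H" by (rule inv_int[OF cH pH])
  finally have e: "integral {0..1} (\<lambda>z. qf (2^j * z) * qf (2^k * z)) = integral {0..1} H" .
  have "\<bar>integral {0..1} (\<lambda>v. qf v * qf (2^(k-j) * v))\<bar> \<le> 24 * 2 / 2^(k-j)"
    by (rule lip_decay[OF _ qf_lip _ qf_cont qf_period qf_int qf_bound])
       (auto intro: continuous_on_subset[OF qf_cont])
  then show ?thesis using e unfolding H_def by simp
qed

definition Tp :: "(nat \<Rightarrow> real) \<Rightarrow> nat \<Rightarrow> real \<Rightarrow> complex" where
  "Tp \<mu> K z = (\<Prod>k<K. 1 + \<i> * complex_of_real (\<mu> k * rho (2^k * z)))"

lemma Tp_cont: "continuous_on UNIV (Tp \<mu> K)"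
  unfolding Tp_def
  by (intro continuous_intros continuous_on_compose2[OF rho_cont]) auto

lemma Tp_period: "periodic1 (Tp \<mu> K)"
proof -
  have "rho (2^k * (z+1)) = rho (2^k * z)" for k z
    using periodic1_scale[OF rho_period, of k] unfolding periodic1_def by simp
  then show ?thesis unfolding periodic1_def Tp_def by simp
qed

lemma Tp_int: "integral {0..1} (Tp \<mu> K) = 1"
proof (induction K arbitrary: \<mu>)
  case 0 then show ?case by (simp add: Tp_def)
next
  case (Suc K)
  define h where "h = (\<lambda>z. 1 + \<i> * complex_of_real (\<mu> 0 * rho z))"
  have ch: "continuous_on {0..1} h" unfolding h_def
    by (intro continuous_intros continuous_on_subset[OF rho_cont]) auto
  have e1: "Tp \<mu> (Suc K) z = h z * Tp (\<lambda>k. \<mu> (Suc k)) K (2 * z)" for z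
    unfolding Tp_def h_def prod.lessThan_Suc_shift by (simp add: ac_simps)
  have "integral {0..1} (Tp \<mu> (Suc K)) = integral {0..1} (\<lambda>z. h z * Tp (\<lambda>k. \<mu> (Suc k)) K (2 * z))"
    by (rule integral_cong) (rule e1)
  also have "\<dots> = integral {0..1} (\<lambda>w. ((1/2) *\<^sub>R (h (w/2) + h ((w+1)/2))) * Tp (\<lambda>k. \<mu> (Suc k)) K w)"
    by (rule double_int[OF ch Tp_cont Tp_period])
  also have "\<dots> = integral {0..1} (Tp (\<lambda>k. \<mu> (Suc k)) K)"
  proof (rule integral_cong)
    fix w :: real assume w: "w \<in> {0..1}"
    have "h (w/2) + h ((w+1)/2) = 2 + \<i> * complex_of_real (\<mu> 0 * (rho (w/2) + rho ((w+1)/2)))"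
      unfolding h_def by (simp add: algebra_simps)
    also have "\<dots> = 2" using rho_sum[OF w] by simp
    finally show "((1/2) *\<^sub>R (h (w/2) + h ((w+1)/2))) * Tp (\<lambda>k. \<mu> (Suc k)) K w = Tp (\<lambda>k. \<mu> (Suc k)) K w"
      by simp
  qed
  also have "\<dots> = 1" by (rule Suc.IH)
  finally show ?case .
qed

definition uf :: "real \<Rightarrow> complex" where "uf x = iexp x / (1 + \<i> * complex_of_real x)"
definition vf :: "real \<Rightarrow> real" where "vf x = exp (- (x^2) / 2)"

lemma norm_1ix: "norm (1 + \<i> * complex_of_real x) = sqrt (1 + x^2)"
proof -
  have "1 + \<i> * complex_of_real x = Complex 1 x" by (simp add: complex_eq_iff)
  then show ?thesis by (simp add: cmod_def power2_eq_square)
qed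

lemma norm_1ix_ge: "norm (1 + \<i> * complex_of_real x) \<ge> 1"
  unfolding norm_1ix by simp

lemma norm_1ix_ne: "1 + \<i> * complex_of_real x \<noteq> 0"
  using norm_1ix_ge[of x] by auto

lemma norm_1ix_le_exp: "norm (1 + \<i> * complex_of_real x) \<le> exp (x^2 / 2)"
proof -
  have "1 + x^2 \<le> exp (x^2)" using exp_ge_add_one_self[of "x^2"] by simp
  then have "sqrt (1 + x^2) \<le> sqrt (exp (x^2))" by (rule real_sqrt_le_mono)
  also have "sqrt (exp (x^2)) = exp (x^2 / 2)"
  proof -
    have "exp (x^2) = (exp (x^2 / 2))^2" by (simp add: exp_double[symmetric])
    then show ?thesis by simp
  qed
  finally show ?thesis unfolding norm_1ix .
qed

lemma norm_iexp [simp]: "norm (iexp x) = 1"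
  by simp

lemma uf_norm: "norm (uf x) \<le> 1"
  unfolding uf_def norm_divide using norm_1ix_ge[of x] by (simp add: divide_le_eq_1)

lemma vf_bounds: "0 \<le> vf x" "vf x \<le> 1"
  unfolding vf_def by auto

lemma iexp_uf: "iexp x = (1 + \<i> * complex_of_real x) * uf x"
  unfolding uf_def using norm_1ix_ne[of x] by simp

lemma exp_neg_upper: fixes s :: real assumes "s \<ge> 0" shows "exp (- s) \<le> 1 - s + s^2"
proof -
  have "exp (-s) = 1 / exp s" by (simp add: exp_minus field_simps)
  also have "\<dots> \<le> 1 / (1 + s)"
    using exp_ge_add_one_self[of s] assms by (intro divide_left_mono) auto
  also have "\<dots> \<le> 1 - s + s^2"
  proof -
    have "1 \<le> (1 - s + s^2) * (1 + s)" using assms by (simp add: algebra_simps power2_eq_square power3_eq_cube)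
    then show ?thesis using assms by (simp add: divide_le_eq)
  qed
  finally show ?thesis .
qed

lemma uf_vf: "norm (uf x - complex_of_real (vf x)) \<le> 2 * \<bar>x\<bar>^3"
proof (cases "\<bar>x\<bar> \<ge> 1")
  case True
  have "norm (uf x - complex_of_real (vf x)) \<le> norm (uf x) + norm (complex_of_real (vf x))"
    by (rule norm_triangle_ineq4)
  also have "\<dots> \<le> 2" using uf_norm[of x] vf_bounds[of x] by simp
  also have "\<dots> \<le> 2 * \<bar>x\<bar>^3" using True by (simp add: one_le_power)
  finally show ?thesis .
next
  case False
  then have x1: "\<bar>x\<bar> < 1" by simp
  define s where "s = x^2 / 2"
  have s0: "s \<ge> 0" unfolding s_def by simp
  define R1 where "R1 = iexp x - (1 + \<i> * complex_of_real x - complex_of_real (x^2 / 2))"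
  define R2 where "R2 = vf x - (1 - s)"
  have R1b: "norm R1 \<le> \<bar>x\<bar>^3 / 6"
  proof -
    have "(\<Sum>k\<le>2. (\<i> * complex_of_real x)^k / fact k) = 1 + \<i> * complex_of_real x - complex_of_real (x^2 / 2)"
      by (simp add: numeral_2_eq_2 power2_eq_square field_simps)
    then show ?thesis using iexp_approx1[of x 2] by (simp add: R1_def numeral_3_eq_3)
  qed
  have R2b: "0 \<le> R2" "R2 \<le> s^2"
    unfolding R2_def vf_def s_def[symmetric]
    using exp_ge_add_one_self[of "-s"] exp_neg_upper[OF s0]
    by (simp_all add: s_def)
  have key: "iexp x - (1 + \<i> * complex_of_real x) * complex_of_real (vf x)
        = R1 + \<i> * complex_of_real (x * s) - (1 + \<i> * complex_of_real x) * complex_of_real R2"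
    unfolding R1_def R2_def s_def by (simp add: algebra_simps)
  have "norm (iexp x - (1 + \<i> * complex_of_real x) * complex_of_real (vf x))
     \<le> norm R1 + norm (\<i> * complex_of_real (x * s)) + norm ((1 + \<i> * complex_of_real x) * complex_of_real R2)"
    unfolding key by (rule order_trans[OF norm_triangle_ineq4]) (simp add: norm_triangle_ineq)
  also have "\<dots> \<le> \<bar>x\<bar>^3 / 6 + \<bar>x\<bar>^3 / 2 + 2 * (\<bar>x\<bar>^3 / 4)"
  proof (intro add_mono)
    show "norm R1 \<le> \<bar>x\<bar>^3 / 6" by (rule R1b)
    show "norm (\<i> * complex_of_real (x * s)) \<le> \<bar>x\<bar>^3 / 2"
      by (simp add: norm_mult s_def abs_mult power2_eq_square power3_eq_cube)
    have n2: "norm (1 + \<i> * complex_of_real x) \<le> 2"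
    proof -
      have "x^2 < 1" using x1 by (simp add: abs_square_less_1)
      then have "sqrt (1 + x^2) \<le> sqrt 4" by (intro real_sqrt_le_mono) linarith
      then show ?thesis unfolding norm_1ix by simp
    qed
    have "R2 \<le> \<bar>x\<bar>^3 / 4"
    proof -
      have "s^2 = x^2 * x^2 / 4" unfolding s_def by (simp add: power2_eq_square)
      also have "x^2 * x^2 \<le> \<bar>x\<bar>^3"
      proof -
        have "x^2 * x^2 = \<bar>x\<bar>^3 * \<bar>x\<bar>" by (simp add: power2_eq_square power3_eq_cube abs_mult[symmetric] abs_mult_self_eq)
        also have "\<dots> \<le> \<bar>x\<bar>^3 * 1" using x1 by (intro mult_left_mono) auto
        finally show ?thesis by simp
      qed
      then have "x^2 * x^2 / 4 \<le> \<bar>x\<bar>^3 / 4" by simp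
      finally show ?thesis using R2b by simp
    qed
    then show "norm ((1 + \<i> * complex_of_real x) * complex_of_real R2) \<le> 2 * (\<bar>x\<bar>^3 / 4)"
      unfolding norm_mult using n2 R2b by (intro mult_mono) auto
  qed
  also have "\<dots> \<le> 2 * \<bar>x\<bar>^3" by simp
  finally have main: "norm (iexp x - (1 + \<i> * complex_of_real x) * complex_of_real (vf x)) \<le> 2 * \<bar>x\<bar>^3" .
  have "uf x - complex_of_real (vf x) = (iexp x - (1 + \<i> * complex_of_real x) * complex_of_real (vf x)) / (1 + \<i> * complex_of_real x)"
    unfolding uf_def using norm_1ix_ne[of x] by (simp add: field_simps)
  then have "norm (uf x - complex_of_real (vf x)) = norm (iexp x - (1 + \<i> * complex_of_real x) * complex_of_real (vf x)) / norm (1 + \<i> * complex_of_real x)"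
    by (simp add: norm_divide)
  also have "\<dots> \<le> norm (iexp x - (1 + \<i> * complex_of_real x) * complex_of_real (vf x))"
    using divide_left_mono[OF norm_1ix_ge[of x], of "norm (iexp x - (1 + \<i> * complex_of_real x) * complex_of_real (vf x))"]
    by (simp add: norm_1ix_ne)
  finally show ?thesis using main by simp
qed

lemma exp_lip: fixes a b :: real assumes "a \<le> 0" "b \<le> 0" shows "\<bar>exp a - exp b\<bar> \<le> \<bar>a - b\<bar>"
proof -
  have *: "exp y - exp x \<le> y - x" if "x \<le> y" "y \<le> 0" for x y :: real
  proof -
    have "exp y - exp x = exp y * (1 - exp (x - y))" by (simp add: exp_diff field_simps)
    also have "\<dots> \<le> 1 * (1 - exp (x - y))"
      using that by (intro mult_right_mono) auto
    also have "\<dots> \<le> y - x" using exp_ge_add_one_self[of "x - y"] by (simp only: mult.left_neutral)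
    finally show ?thesis .
  qed
  show ?thesis
  proof (cases "a \<le> b")
    case True then show ?thesis using *[of a b] assms by auto
  next
    case False then show ?thesis using *[of b a] assms by auto
  qed
qed

lemma abs_le_quad: fixes m y :: real assumes "m > 0" shows "\<bar>y\<bar> \<le> m / 2 + y^2 / (2 * m)"
proof -
  have "0 \<le> (\<bar>y\<bar> - m)^2" by simp
  then have "2 * m * \<bar>y\<bar> \<le> m^2 + y^2" by (simp add: power2_eq_square algebra_simps)
  then show ?thesis using assms by (simp add: field_simps power2_eq_square)
qed

lemma geom_dist: "(\<Sum>k<K. (1/2::real)^(if k \<le> j then j - k else k - j)) \<le> 3"
proof -
  have "(\<Sum>k<K. (1/2::real)^(if k \<le> j then j - k else k - j))
      = (\<Sum>k\<in>{k. k < K \<and> k \<le> j}. (1/2::real)^(j - k)) + (\<Sum>k\<in>{k. k < K \<and> j < k}. (1/2::real)^(k - j))"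
  proof -
    have "{..<K} = {k. k < K \<and> k \<le> j} \<union> {k. k < K \<and> j < k}" by auto
    then have "(\<Sum>k<K. (1/2::real)^(if k \<le> j then j - k else k - j))
       = (\<Sum>k\<in>{k. k < K \<and> k \<le> j} \<union> {k. k < K \<and> j < k}. (1/2::real)^(if k \<le> j then j - k else k - j))"
      by simp
    also have "\<dots> = (\<Sum>k\<in>{k. k < K \<and> k \<le> j}. (1/2::real)^(if k \<le> j then j - k else k - j))
                   + (\<Sum>k\<in>{k. k < K \<and> j < k}. (1/2::real)^(if k \<le> j then j - k else k - j))"
      by (rule sum.union_disjoint) auto
    also have "\<dots> = (\<Sum>k\<in>{k. k < K \<and> k \<le> j}. (1/2::real)^(j - k)) + (\<Sum>k\<in>{k. k < K \<and> j < k}. (1/2::real)^(k - j))"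
      by (intro arg_cong2[where f="(+)"] sum.cong) auto
    finally show ?thesis .
  qed
  also have "\<dots> \<le> 2 + 1"
  proof (rule add_mono)
    have "(\<Sum>k\<in>{k. k < K \<and> k \<le> j}. (1/2::real)^(j - k)) \<le> (\<Sum>k\<in>{..j}. (1/2::real)^(j - k))"
      by (intro sum_mono2) auto
    also have "\<dots> = (\<Sum>i\<in>{..j}. (1/2::real)^i)"
      by (rule sum.reindex_bij_witness[where i="\<lambda>i. j - i" and j="\<lambda>k. j - k"]) auto
    also have "\<dots> \<le> 2"
    proof -
      have "(\<Sum>i\<in>{..j}. (1/2::real)^i) = (\<Sum>i<Suc j. (1/2::real)^i)" by (simp add: lessThan_Suc_atMost)
      also have "\<dots> = ((1/2)^Suc j - 1) / (1/2 - 1)" by (rule geometric_sum) simp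
      also have "\<dots> \<le> 2" by simp
      finally show ?thesis .
    qed
    finally show "(\<Sum>k\<in>{k. k < K \<and> k \<le> j}. (1/2::real)^(j - k)) \<le> 2" .
    have "(\<Sum>k\<in>{k. k < K \<and> j < k}. (1/2::real)^(k - j)) \<le> (\<Sum>k\<in>{Suc j..<Suc j + K}. (1/2::real)^(k - j))"
      by (intro sum_mono2) auto
    also have "\<dots> = (\<Sum>k\<in>{Suc j..<Suc j + K}. (1/2::real)^(Suc (k - Suc j)))"
      by (intro sum.cong) (auto simp: Suc_diff_Suc)
    also have "\<dots> = (\<Sum>i<K. (1/2::real)^(Suc i))"
      by (rule sum.reindex_bij_witness[where j="\<lambda>i. i - Suc j" and i="\<lambda>k. k + Suc j"]) auto
    also have "\<dots> = (1/2) * (\<Sum>i<K. (1/2::real)^i)" by (simp add: sum_distrib_left)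
    also have "\<dots> \<le> 1"
    proof -
      have "(\<Sum>i<K. (1/2::real)^i) = ((1/2)^K - 1) / (1/2 - 1)" by (rule geometric_sum) simp
      also have "\<dots> \<le> 2" by simp
      finally show ?thesis by simp
    qed
    finally show "(\<Sum>k\<in>{k. k < K \<and> j < k}. (1/2::real)^(k - j)) \<le> 1" .
  qed
  finally show ?thesis by simp
qed

lemma qk_cont: "continuous_on UNIV (\<lambda>z. qf (2^k * z))"
  by (intro continuous_on_compose2[OF qf_cont] continuous_intros) auto

lemma qk_int: "integral {0..1} (\<lambda>z. qf (2^k * z)) = 0"
  using inv_int[OF qf_cont qf_period, of k] qf_int by simp

lemma qk_cov: "integral {0..1} (\<lambda>z. qf (2^j * z) * qf (2^k * z)) \<le> 48 * (1/2)^(if k \<le> j then j - k else k - j)"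
proof (cases "j \<le> k")
  case True
  have "integral {0..1} (\<lambda>z. qf (2^j * z) * qf (2^k * z)) \<le> 48 / 2^(k-j)"
    using qf_cov[OF True] by simp
  moreover have "(if k \<le> j then j - k else k - j) = k - j" using True by auto
  ultimately show ?thesis by (simp add: power_one_over)
next
  case False
  have "integral {0..1} (\<lambda>z. qf (2^k * z) * qf (2^j * z)) \<le> 48 / 2^(j-k)"
    using qf_cov[of k j] False by simp
  moreover have "(if k \<le> j then j - k else k - j) = j - k" using False by auto
  ultimately show ?thesis by (simp add: power_one_over mult.commute)
qed

lemma var_bound:
  fixes b :: "nat \<Rightarrow> real"
  assumes bm: "\<And>k. \<bar>b k\<bar> \<le> m"
  shows "integral {0..1} (\<lambda>z. (3 * (\<Sum>k<K. (b k)^2 * (rho (2^k * z))^2) - 1)^2)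
          \<le> 144 * m^2 * (\<Sum>k<K. (b k)^2) + (1 - (\<Sum>k<K. (b k)^2))^2"
proof -
  define A where "A z = (\<Sum>k<K. (b k)^2 * qf (2^k * z))" for z
  define \<tau> where "\<tau> = 1 - (\<Sum>k<K. (b k)^2)"
  have QA: "3 * (\<Sum>k<K. (b k)^2 * (rho (2^k * z))^2) - 1 = A z - \<tau>" for z
  proof -
    have "A z = (\<Sum>k<K. 3 * ((b k)^2 * (rho (2^k * z))^2) - (b k)^2)"
      unfolding A_def qf_def by (intro sum.cong) (auto simp: algebra_simps)
    also have "\<dots> = 3 * (\<Sum>k<K. (b k)^2 * (rho (2^k * z))^2) - (\<Sum>k<K. (b k)^2)"
      by (simp add: sum_subtractf sum_distrib_left)
    finally show ?thesis unfolding \<tau>_def by simp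
  qed
  have cA: "continuous_on UNIV A" unfolding A_def
    by (intro continuous_intros continuous_on_compose2[OF qf_cont]) auto
  have cA': "continuous_on {0..1} A" by (rule continuous_on_subset[OF cA]) auto
  have iA: "integral {0..1} A = 0"
  proof -
    have "integral {0..1} A = (\<Sum>k<K. integral {0..1} (\<lambda>z. (b k)^2 * qf (2^k * z)))"
      unfolding A_def
      by (rule integral_sum) (auto intro!: integrable_continuous_interval continuous_intros
            continuous_on_subset[OF qk_cont])
    also have "\<dots> = (\<Sum>k<K. (b k)^2 * integral {0..1} (\<lambda>z. qf (2^k * z)))"
      by (simp add: integral_mult)
    also have "\<dots> = 0" by (simp add: qk_int)
    finally show ?thesis .
  qed
  have iA2: "integral {0..1} (\<lambda>z. (A z)^2)
      = (\<Sum>j<K. \<Sum>k<K. (b j)^2 * (b k)^2 * integral {0..1} (\<lambda>z. qf (2^j * z) * qf (2^k * z)))"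
  proof -
    have "(\<lambda>z. (A z)^2) = (\<lambda>z. \<Sum>j<K. \<Sum>k<K. ((b j)^2 * (b k)^2) * (qf (2^j * z) * qf (2^k * z)))"
      unfolding A_def power2_eq_square sum_product by (intro ext sum.cong) (auto simp: algebra_simps)
    then have "integral {0..1} (\<lambda>z. (A z)^2)
       = (\<Sum>j<K. integral {0..1} (\<lambda>z. \<Sum>k<K. ((b j)^2 * (b k)^2) * (qf (2^j * z) * qf (2^k * z))))"
      by (simp, intro integral_sum) (auto intro!: integrable_continuous_interval continuous_intros
            continuous_on_subset[OF qk_cont])
    also have "\<dots> = (\<Sum>j<K. \<Sum>k<K. integral {0..1} (\<lambda>z. ((b j)^2 * (b k)^2) * (qf (2^j * z) * qf (2^k * z))))"
      by (intro sum.cong refl integral_sum) (auto intro!: integrable_continuous_interval continuous_intros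
            continuous_on_subset[OF qk_cont])
    also have "\<dots> = (\<Sum>j<K. \<Sum>k<K. (b j)^2 * (b k)^2 * integral {0..1} (\<lambda>z. qf (2^j * z) * qf (2^k * z)))"
      by (simp add: integral_mult)
    finally show ?thesis .
  qed
  have "integral {0..1} (\<lambda>z. (A z)^2) \<le> (\<Sum>j<K. \<Sum>k<K. (b j)^2 * m^2 * (48 * (1/2)^(if k \<le> j then j - k else k - j)))"
    unfolding iA2
  proof (intro sum_mono)
    fix j k
    have bk: "(b k)^2 \<le> m^2" using bm[of k] by (simp add: abs_le_square_iff[symmetric] order_trans[OF abs_ge_zero bm] abs_of_nonneg)
    have "(b j)^2 * (b k)^2 * integral {0..1} (\<lambda>z. qf (2^j * z) * qf (2^k * z))
        \<le> (b j)^2 * (b k)^2 * (48 * (1/2)^(if k \<le> j then j - k else k - j))"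
      by (intro mult_left_mono qk_cov) auto
    also have "\<dots> \<le> (b j)^2 * m^2 * (48 * (1/2)^(if k \<le> j then j - k else k - j))"
      by (intro mult_right_mono mult_left_mono bk) auto
    finally show "(b j)^2 * (b k)^2 * integral {0..1} (\<lambda>z. qf (2^j * z) * qf (2^k * z))
        \<le> (b j)^2 * m^2 * (48 * (1/2)^(if k \<le> j then j - k else k - j))" .
  qed
  also have "\<dots> = (\<Sum>j<K. (b j)^2 * m^2 * 48 * (\<Sum>k<K. (1/2::real)^(if k \<le> j then j - k else k - j)))"
    by (simp add: sum_distrib_left mult.assoc)
  also have "\<dots> \<le> (\<Sum>j<K. (b j)^2 * m^2 * 48 * 3)"
    by (intro sum_mono mult_left_mono geom_dist) auto
  also have "\<dots> = 144 * m^2 * (\<Sum>k<K. (b k)^2)"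
    by (simp add: sum_distrib_left algebra_simps)
  finally have A2: "integral {0..1} (\<lambda>z. (A z)^2) \<le> 144 * m^2 * (\<Sum>k<K. (b k)^2)" .
  have "integral {0..1} (\<lambda>z. (3 * (\<Sum>k<K. (b k)^2 * (rho (2^k * z))^2) - 1)^2)
      = integral {0..1} (\<lambda>z. (A z)^2 - 2 * \<tau> * A z + \<tau>^2)"
    unfolding QA by (simp add: power2_eq_square algebra_simps)
  also have "\<dots> = integral {0..1} (\<lambda>z. (A z)^2) - 2 * \<tau> * integral {0..1} A + \<tau>^2"
  proof -
    have i1: "(\<lambda>z. (A z)^2) integrable_on {0..1}"
      by (intro integrable_continuous_interval continuous_intros cA')
    have i2: "(\<lambda>z. 2 * \<tau> * A z) integrable_on {0..1}"
      by (intro integrable_continuous_interval continuous_intros cA')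
    have "integral {0..1} (\<lambda>z. (A z)^2 - 2 * \<tau> * A z + \<tau>^2)
        = integral {0..1} (\<lambda>z. (A z)^2 - 2 * \<tau> * A z) + integral {0..1} (\<lambda>z::real. \<tau>^2)"
      using i1 i2 by (intro integral_add integrable_diff) auto
    also have "\<dots> = integral {0..1} (\<lambda>z. (A z)^2) - integral {0..1} (\<lambda>z. 2 * \<tau> * A z) + \<tau>^2"
      using i1 i2 by (simp add: integral_diff)
    also have "integral {0..1} (\<lambda>z. 2 * \<tau> * A z) = 2 * \<tau> * integral {0..1} A"
      by (simp add: integral_mult)
    finally show ?thesis .
  qed
  also have "\<dots> \<le> 144 * m^2 * (\<Sum>k<K. (b k)^2) + \<tau>^2"
    using A2 iA by simp
  finally show ?thesis unfolding \<tau>_def .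
qed

lemma ptw_bound:
  fixes b :: "nat \<Rightarrow> real"
  assumes bm: "\<And>k. \<bar>b k\<bar> \<le> m" and bs: "(\<Sum>k<K. (b k)^2) \<le> 1"
  shows "norm (iexp (t * (sqrt 3 * (\<Sum>k<K. b k * rho (2^k * z))))
               - complex_of_real (exp (- (t^2) / 2)) * Tp (\<lambda>k. t * sqrt 3 * b k) K z)
     \<le> exp (3 * t^2 / 2) * (6 * sqrt 3 * \<bar>t\<bar>^3 * m
          + (t^2 / 2) * \<bar>3 * (\<Sum>k<K. (b k)^2 * (rho (2^k * z))^2) - 1\<bar>)"
proof -
  define x where "x k = t * sqrt 3 * b k * rho (2^k * z)" for k
  define Q where "Q = 3 * (\<Sum>k<K. (b k)^2 * (rho (2^k * z))^2)"
  define e where "e = exp (- (t^2) / 2)"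
  have m0: "0 \<le> m" using bm[of 0] by linarith
  have sumx: "t * (sqrt 3 * (\<Sum>k<K. b k * rho (2^k * z))) = (\<Sum>k<K. x k)"
    unfolding x_def by (simp add: sum_distrib_left mult.assoc)
  have sumx2: "(\<Sum>k<K. (x k)^2) = t^2 * Q"
    unfolding x_def Q_def by (simp add: sum_distrib_left power_mult_distrib algebra_simps)
  have Tpx: "Tp (\<lambda>k. t * sqrt 3 * b k) K z = (\<Prod>k<K. 1 + \<i> * complex_of_real (x k))"
    unfolding Tp_def x_def by (simp add: mult.assoc)
  have ie: "iexp (\<Sum>k<K. x k) = (\<Prod>k<K. iexp (x k))"
  proof -
    have "\<i> * complex_of_real (\<Sum>k<K. x k) = (\<Sum>k<K. \<i> * complex_of_real (x k))"
      by (simp add: sum_distrib_left)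
    then show ?thesis by (simp add: exp_sum)
  qed
  also have "\<dots> = (\<Prod>k<K. 1 + \<i> * complex_of_real (x k)) * (\<Prod>k<K. uf (x k))"
    by (simp add: iexp_uf prod.distrib)
  finally have ie2: "iexp (\<Sum>k<K. x k) = Tp (\<lambda>k. t * sqrt 3 * b k) K z * (\<Prod>k<K. uf (x k))"
    using Tpx by simp
  have diffeq: "iexp (\<Sum>k<K. x k) - complex_of_real e * Tp (\<lambda>k. t * sqrt 3 * b k) K z
      = Tp (\<lambda>k. t * sqrt 3 * b k) K z * ((\<Prod>k<K. uf (x k)) - complex_of_real e)"
    unfolding ie2 by (simp add: algebra_simps)
  have x2b: "(x k)^2 \<le> 3 * t^2 * (b k)^2" for k
  proof -
    have "(rho (2^k * z))^2 \<le> 1" using rho_bound by (simp add: abs_square_le_1)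
    then have "(x k)^2 = 3 * t^2 * (b k)^2 * (rho (2^k * z))^2"
      unfolding x_def by (simp add: power_mult_distrib)
    also have "\<dots> \<le> 3 * t^2 * (b k)^2 * 1"
      using \<open>(rho (2^k * z))^2 \<le> 1\<close> by (intro mult_left_mono) auto
    finally show ?thesis by simp
  qed
  have nT: "norm (Tp (\<lambda>k. t * sqrt 3 * b k) K z) \<le> exp (3 * t^2 / 2)"
  proof -
    have "norm (Tp (\<lambda>k. t * sqrt 3 * b k) K z) = (\<Prod>k<K. norm (1 + \<i> * complex_of_real (x k)))"
      unfolding Tpx by (simp add: prod_norm)
    also have "\<dots> \<le> (\<Prod>k<K. exp ((x k)^2 / 2))"
      by (intro prod_mono conjI norm_1ix_le_exp) auto
    also have "\<dots> = exp (\<Sum>k<K. (x k)^2 / 2)" by (simp add: exp_sum)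
    also have "\<dots> \<le> exp (3 * t^2 / 2)"
    proof -
      have "(\<Sum>k<K. (x k)^2 / 2) \<le> (\<Sum>k<K. 3 * t^2 * (b k)^2 / 2)"
        by (intro sum_mono) (use x2b in \<open>auto simp: divide_right_mono\<close>)
      also have "\<dots> = 3 * t^2 / 2 * (\<Sum>k<K. (b k)^2)" by (simp add: sum_distrib_left algebra_simps)
      also have "\<dots> \<le> 3 * t^2 / 2 * 1" using bs by (intro mult_left_mono) auto
      finally show ?thesis by simp
    qed
    finally show ?thesis .
  qed
  have x3b: "\<bar>x k\<bar>^3 \<le> 3 * sqrt 3 * \<bar>t\<bar>^3 * m * (b k)^2" for k
  proof -
    have "\<bar>x k\<bar> \<le> \<bar>t\<bar> * sqrt 3 * \<bar>b k\<bar>"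
      unfolding x_def abs_mult using rho_bound[of "2^k * z"] by (simp add: mult_left_le)
    then have "\<bar>x k\<bar>^3 \<le> (\<bar>t\<bar> * sqrt 3 * \<bar>b k\<bar>)^3" by (intro power_mono) auto
    also have "\<dots> = \<bar>t\<bar>^3 * (3 * sqrt 3) * (\<bar>b k\<bar> * (b k)^2)"
    proof -
      have a: "(\<bar>t\<bar> * sqrt 3 * \<bar>b k\<bar>)^3 = \<bar>t\<bar>^3 * (sqrt 3)^3 * \<bar>b k\<bar>^3"
        by (simp add: power_mult_distrib)
      have b: "(sqrt 3)^3 = 3 * sqrt (3::real)" by (simp add: power3_eq_cube)
      have c: "\<bar>b k\<bar>^3 = \<bar>b k\<bar> * (b k)^2"
        by (simp add: power3_eq_cube power2_eq_square abs_mult_self_eq)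
      show ?thesis unfolding a b c ..
    qed
    also have "\<bar>t\<bar>^3 * (3 * sqrt 3) * (\<bar>b k\<bar> * (b k)^2) \<le> \<bar>t\<bar>^3 * (3 * sqrt 3) * (m * (b k)^2)"
      by (intro mult_left_mono mult_right_mono bm) auto
    finally show ?thesis by (simp add: algebra_simps)
  qed
  have n1: "norm ((\<Prod>k<K. uf (x k)) - (\<Prod>k<K. complex_of_real (vf (x k)))) \<le> 6 * sqrt 3 * \<bar>t\<bar>^3 * m"
  proof -
    have "norm ((\<Prod>k<K. uf (x k)) - (\<Prod>k<K. complex_of_real (vf (x k))))
        \<le> (\<Sum>k<K. norm (uf (x k) - complex_of_real (vf (x k))))"
      by (rule norm_prod_diff) (auto simp: uf_norm vf_bounds abs_of_nonneg)
    also have "\<dots> \<le> (\<Sum>k<K. 2 * (3 * sqrt 3 * \<bar>t\<bar>^3 * m * (b k)^2))"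
      by (intro sum_mono order_trans[OF uf_vf]) (use x3b in \<open>auto simp: ac_simps\<close>)
    also have "\<dots> = 6 * sqrt 3 * \<bar>t\<bar>^3 * m * (\<Sum>k<K. (b k)^2)"
      by (simp add: sum_distrib_left algebra_simps)
    also have "\<dots> \<le> 6 * sqrt 3 * \<bar>t\<bar>^3 * m * 1"
      using bs m0 by (intro mult_left_mono) auto
    finally show ?thesis by simp
  qed
  have n2: "norm ((\<Prod>k<K. complex_of_real (vf (x k))) - complex_of_real e) \<le> (t^2 / 2) * \<bar>Q - 1\<bar>"
  proof -
    have "(\<Prod>k<K. complex_of_real (vf (x k))) = complex_of_real (exp (- (t^2 * Q) / 2))"
    proof -
      have "(\<Prod>k<K. vf (x k)) = exp (\<Sum>k<K. - ((x k)^2) / 2)" unfolding vf_def by (simp add: exp_sum)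
      also have "(\<Sum>k<K. - ((x k)^2) / 2) = - (\<Sum>k<K. (x k)^2) / 2" by (simp add: sum_divide_distrib sum_negf)
      finally have "(\<Prod>k<K. vf (x k)) = exp (- (t^2 * Q) / 2)" unfolding sumx2 by simp
      then show ?thesis by (simp flip: of_real_prod)
    qed
    then have "norm ((\<Prod>k<K. complex_of_real (vf (x k))) - complex_of_real e)
        = \<bar>exp (- (t^2 * Q) / 2) - exp (- (t^2) / 2)\<bar>"
      unfolding e_def by (simp flip: of_real_diff)
    also have "\<dots> \<le> \<bar>- (t^2 * Q) / 2 - - (t^2) / 2\<bar>"
    proof (rule exp_lip)
      have "Q \<ge> 0" unfolding Q_def by (intro mult_nonneg_nonneg sum_nonneg) auto
      then show "- (t^2 * Q) / 2 \<le> 0" by simp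
    qed simp
    also have "\<dots> = (t^2 / 2) * \<bar>Q - 1\<bar>"
    proof -
      have "\<bar>- (t^2 * Q) / 2 - - (t^2) / 2\<bar> = \<bar>(t^2 / 2) * (1 - Q)\<bar>"
        by (rule arg_cong[where f=abs]) (simp add: algebra_simps)
      also have "\<dots> = (t^2 / 2) * \<bar>Q - 1\<bar>" by (simp add: abs_mult abs_minus_commute)
      finally show ?thesis .
    qed
    finally show ?thesis .
  qed
  have "norm ((\<Prod>k<K. uf (x k)) - complex_of_real e) \<le> 6 * sqrt 3 * \<bar>t\<bar>^3 * m + (t^2 / 2) * \<bar>Q - 1\<bar>"
    using norm_triangle_le[OF add_mono[OF n1 n2]] by (simp add: algebra_simps)
  then have "norm (iexp (\<Sum>k<K. x k) - complex_of_real e * Tp (\<lambda>k. t * sqrt 3 * b k) K z)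
      \<le> exp (3 * t^2 / 2) * (6 * sqrt 3 * \<bar>t\<bar>^3 * m + (t^2 / 2) * \<bar>Q - 1\<bar>)"
    unfolding diffeq norm_mult by (intro mult_mono nT) auto
  then show ?thesis unfolding sumx[symmetric] e_def Q_def .
qed

definition Sfun :: "(nat \<Rightarrow> real) \<Rightarrow> real \<Rightarrow> real" where
  "Sfun b z = sqrt 3 * (\<Sum>k. b k * rho (2^k * z))"

definition Kt :: "real \<Rightarrow> real" where
  "Kt t = exp (3 * t^2 / 2) * (6 * sqrt 3 * \<bar>t\<bar>^3 + 37 * t^2)"

lemma summable_rho_terms:
  assumes "summable (\<lambda>k. \<bar>b k\<bar>)"
  shows "summable (\<lambda>k. b k * rho (2^k * z))"
proof (rule summable_comparison_test[OF _ assms])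
  show "\<exists>N. \<forall>n\<ge>N. norm (b n * rho (2^n * z)) \<le> \<bar>b n\<bar>"
    using rho_bound by (auto simp: abs_mult intro!: mult_left_le)
qed

lemma Sfun_cont:
  assumes "summable (\<lambda>k. \<bar>b k\<bar>)"
  shows "continuous_on UNIV (Sfun b)"
proof -
  have ul: "uniform_limit UNIV (\<lambda>n z. \<Sum>i<n. b i * rho (2^i * z)) (\<lambda>z. \<Sum>i. b i * rho (2^i * z)) sequentially"
    by (rule Weierstrass_m_test[OF _ assms]) (auto simp: abs_mult intro!: mult_left_le rho_bound)
  have "continuous_on UNIV (\<lambda>z. \<Sum>i. b i * rho (2^i * z))"
  proof (rule uniform_limit_theorem[OF _ ul])
    show "\<forall>\<^sub>F n in sequentially. continuous_on UNIV (\<lambda>z. \<Sum>i<n. b i * rho (2^i * z))"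
      by (intro always_eventually allI continuous_intros continuous_on_compose2[OF rho_cont]) auto
  qed simp
  then show ?thesis unfolding Sfun_def[abs_def] by (intro continuous_intros)
qed

lemma Sfun_period: "periodic1 (Sfun b)"
proof -
  have "rho (2^k * (z+1)) = rho (2^k * z)" for k z
    using periodic1_scale[OF rho_period, of k] unfolding periodic1_def by simp
  then show ?thesis unfolding periodic1_def Sfun_def by simp
qed

lemma fin_bound:
  fixes b :: "nat \<Rightarrow> real"
  assumes bm: "\<And>k. \<bar>b k\<bar> \<le> m" and m0: "m > 0" and bs: "(\<Sum>k<K. (b k)^2) \<le> 1"
  shows "norm (integral {0..1} (\<lambda>z. iexp (t * (sqrt 3 * (\<Sum>k<K. b k * rho (2^k * z)))))
               - complex_of_real (exp (- (t^2) / 2)))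
     \<le> exp (3 * t^2 / 2) * (6 * sqrt 3 * \<bar>t\<bar>^3 * m
          + (t^2 / 2) * (m / 2 + (144 * m^2 + (1 - (\<Sum>k<K. (b k)^2))^2) / (2 * m)))"
proof -
  define f where "f z = iexp (t * (sqrt 3 * (\<Sum>k<K. b k * rho (2^k * z))))" for z
  define T where "T = Tp (\<lambda>k. t * sqrt 3 * b k) K"
  define e where "e = complex_of_real (exp (- (t^2) / 2))"
  define Q where "Q z = 3 * (\<Sum>k<K. (b k)^2 * (rho (2^k * z))^2)" for z
  define \<tau> where "\<tau> = 1 - (\<Sum>k<K. (b k)^2)"
  define \<alpha> where "\<alpha> = exp (3 * t^2 / 2) * (6 * sqrt 3 * \<bar>t\<bar>^3 * m + t^2 * m / 4)"
  define \<beta> where "\<beta> = exp (3 * t^2 / 2) * t^2 / (4 * m)"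
  have rk: "continuous_on UNIV (\<lambda>z. rho (2^k * z))" for k
    by (intro continuous_on_compose2[OF rho_cont] continuous_intros) auto
  have cf: "continuous_on {0..1} f" unfolding f_def
    by (intro continuous_intros continuous_on_subset[OF rk]) auto
  have cT: "continuous_on {0..1} T" unfolding T_def by (rule continuous_on_subset[OF Tp_cont]) auto
  have cQ: "continuous_on {0..1} Q" unfolding Q_def
    by (intro continuous_intros continuous_on_subset[OF rk]) auto
  have iT: "integral {0..1} T = 1" unfolding T_def by (rule Tp_int)
  have "integral {0..1} f - e = integral {0..1} (\<lambda>z. f z - e * T z)"
  proof -
    have "integral {0..1} (\<lambda>z. f z - e * T z) = integral {0..1} f - integral {0..1} (\<lambda>z. e * T z)"
      by (intro integral_diff integrable_continuous_interval continuous_intros cf cT)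
    also have "integral {0..1} (\<lambda>z. e * T z) = e" using iT by simp
    finally show ?thesis by simp
  qed
  moreover have "norm (integral {0..1} (\<lambda>z. f z - e * T z)) \<le> integral {0..1} (\<lambda>z. \<alpha> + \<beta> * (Q z - 1)^2)"
  proof (rule integral_norm_bound_integral)
    show "(\<lambda>z. f z - e * T z) integrable_on {0..1}"
      by (intro integrable_continuous_interval continuous_intros cf cT)
    show "(\<lambda>z. \<alpha> + \<beta> * (Q z - 1)^2) integrable_on {0..1}"
      by (intro integrable_continuous_interval continuous_intros cQ)
    fix z :: real assume "z \<in> {0..1}"
    have "norm (f z - e * T z) \<le> exp (3 * t^2 / 2) * (6 * sqrt 3 * \<bar>t\<bar>^3 * m + (t^2 / 2) * \<bar>Q z - 1\<bar>)"
      unfolding f_def e_def T_def Q_def by (rule ptw_bound[OF bm bs])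
    also have "\<dots> \<le> exp (3 * t^2 / 2) * (6 * sqrt 3 * \<bar>t\<bar>^3 * m + (t^2 / 2) * (m / 2 + (Q z - 1)^2 / (2 * m)))"
      by (intro mult_left_mono add_left_mono abs_le_quad m0) auto
    also have "\<dots> = \<alpha> + \<beta> * (Q z - 1)^2"
      unfolding \<alpha>_def \<beta>_def using m0 by (simp add: field_simps)
    finally show "norm (f z - e * T z) \<le> \<alpha> + \<beta> * (Q z - 1)^2" .
  qed
  moreover have "integral {0..1} (\<lambda>z. \<alpha> + \<beta> * (Q z - 1)^2) = \<alpha> + \<beta> * integral {0..1} (\<lambda>z. (Q z - 1)^2)"
  proof -
    have "integral {0..1} (\<lambda>z. \<alpha> + \<beta> * (Q z - 1)^2) = integral {0..1} (\<lambda>z::real. \<alpha>) + integral {0..1} (\<lambda>z. \<beta> * (Q z - 1)^2)"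
      by (intro integral_add integrable_continuous_interval continuous_intros cQ)
    then show ?thesis by simp
  qed
  moreover have "integral {0..1} (\<lambda>z. (Q z - 1)^2) \<le> 144 * m^2 + \<tau>^2"
  proof -
    have "integral {0..1} (\<lambda>z. (Q z - 1)^2) \<le> 144 * m^2 * (\<Sum>k<K. (b k)^2) + \<tau>^2"
      unfolding Q_def \<tau>_def by (rule var_bound[OF bm])
    also have "\<dots> \<le> 144 * m^2 * 1 + \<tau>^2" using bs by (intro add_right_mono mult_left_mono) auto
    finally show ?thesis by simp
  qed
  moreover have "\<beta> \<ge> 0" unfolding \<beta>_def using m0 by simp
  ultimately have "norm (integral {0..1} f - e) \<le> \<alpha> + \<beta> * (144 * m^2 + \<tau>^2)"
    by (smt (verit, best) mult_left_mono)
  also have "\<alpha> + \<beta> * (144 * m^2 + \<tau>^2) = exp (3 * t^2 / 2) * (6 * sqrt 3 * \<bar>t\<bar>^3 * m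
          + (t^2 / 2) * (m / 2 + (144 * m^2 + \<tau>^2) / (2 * m)))"
    unfolding \<alpha>_def \<beta>_def using m0 by (simp add: field_simps)
  finally show ?thesis unfolding f_def e_def \<tau>_def .
qed

lemma norm_iexp_diff: "norm (iexp a - iexp b) \<le> \<bar>a - b\<bar>"
proof -
  have "iexp a - iexp b = iexp b * (iexp (a - b) - 1)"
    by (simp add: algebra_simps exp_add[symmetric] of_real_diff)
  then have "norm (iexp a - iexp b) = norm (iexp (a - b) - 1)" by (simp add: norm_mult)
  also have "\<dots> \<le> \<bar>a - b\<bar>" using iexp_approx1[of "a - b" 0] by simp
  finally show ?thesis .
qed

lemma char_bound_main:
  assumes bsum: "summable (\<lambda>k. \<bar>b k\<bar>)" and b1: "(\<Sum>k. (b k)^2) = 1" and m0: "m > 0"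
    and bm: "\<forall>k. \<bar>b k\<bar> \<le> m"
  shows "norm (integral {0..1} (\<lambda>z. iexp (t * (sqrt 3 * (\<Sum>k. b k * rho (2^k * z)))))
              - complex_of_real (exp (- (t^2) / 2)))
    \<le> exp (3 * t^2 / 2) * (6 * sqrt 3 * \<bar>t\<bar>^3 * m + (t^2 / 2) * (m / 2 + (144 * m^2 + 0^2) / (2 * m)))"
proof -
  define I where "I = integral {0..1} (\<lambda>z. iexp (t * (sqrt 3 * (\<Sum>k. b k * rho (2^k * z)))))"
  define IK where "IK K = integral {0..1} (\<lambda>z. iexp (t * (sqrt 3 * (\<Sum>k<K. b k * rho (2^k * z)))))" for K
  define e where "e = complex_of_real (exp (- (t^2) / 2))"
  define \<delta> where "\<delta> K = (\<Sum>k. \<bar>b k\<bar>) - (\<Sum>k<K. \<bar>b k\<bar>)" for K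
  define \<tau> where "\<tau> K = 1 - (\<Sum>k<K. (b k)^2)" for K
  define g where "g K = \<bar>t\<bar> * sqrt 3 * \<delta> K + exp (3 * t^2 / 2) * (6 * sqrt 3 * \<bar>t\<bar>^3 * m
          + (t^2 / 2) * (m / 2 + (144 * m^2 + (\<tau> K)^2) / (2 * m)))" for K
  have bsq: "summable (\<lambda>k. (b k)^2)"
  proof (rule summable_comparison_test[OF _ summable_mult[OF bsum, of m]])
    have "norm ((b n)^2) \<le> m * \<bar>b n\<bar>" for n
    proof -
      have "\<bar>b n\<bar> * \<bar>b n\<bar> \<le> m * \<bar>b n\<bar>" using bm by (intro mult_right_mono) auto
      then show ?thesis by (simp add: power2_eq_square abs_mult_self_eq)
    qed
    then show "\<exists>N. \<forall>n\<ge>N. norm ((b n)^2) \<le> m * \<bar>b n\<bar>" by blast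
  qed
  have bsK: "(\<Sum>k<K. (b k)^2) \<le> 1" for K
    using sum_le_suminf[OF bsq, of "{..<K}"] b1 by simp
  have rk: "continuous_on UNIV (\<lambda>z. rho (2^k * z))" for k
    by (intro continuous_on_compose2[OF rho_cont] continuous_intros) auto
  have tail: "\<bar>(\<Sum>k. b k * rho (2^k * z)) - (\<Sum>k<K. b k * rho (2^k * z))\<bar> \<le> \<delta> K" for K z
  proof -
    have s1: "summable (\<lambda>k. b k * rho (2^k * z))" by (rule summable_rho_terms[OF bsum])
    have "(\<Sum>k. b k * rho (2^k * z)) - (\<Sum>k<K. b k * rho (2^k * z)) = (\<Sum>n. b (n + K) * rho (2^(n+K) * z))"
      using suminf_split_initial_segment[OF s1, of K] by simp
    also have "\<bar>\<dots>\<bar> \<le> (\<Sum>n. \<bar>b (n + K)\<bar>)"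
    proof -
      have s2: "summable (\<lambda>n. \<bar>b (n + K)\<bar>)" using summable_ignore_initial_segment[OF bsum, of K] .
      have s3: "summable (\<lambda>n. \<bar>b (n + K) * rho (2^(n+K) * z)\<bar>)"
        by (rule summable_comparison_test[OF _ s2]) (auto simp: abs_mult intro!: mult_left_le rho_bound)
      have "\<bar>\<Sum>n. b (n + K) * rho (2^(n+K) * z)\<bar> \<le> (\<Sum>n. \<bar>b (n + K) * rho (2^(n+K) * z)\<bar>)"
        by (rule summable_rabs[OF s3])
      also have "\<dots> \<le> (\<Sum>n. \<bar>b (n + K)\<bar>)"
        by (rule suminf_le[OF _ s3 s2]) (auto simp: abs_mult intro!: mult_left_le rho_bound)
      finally show ?thesis .
    qed
    also have "(\<Sum>n. \<bar>b (n + K)\<bar>) = \<delta> K"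
      unfolding \<delta>_def using suminf_split_initial_segment[OF bsum, of K] by simp
    finally show ?thesis .
  qed
  have step: "norm (I - e) \<le> g K" for K
  proof -
    define F1 where "F1 z = iexp (t * (sqrt 3 * (\<Sum>k. b k * rho (2 ^ k * z))))" for z
    define F2 where "F2 z = iexp (t * (sqrt 3 * (\<Sum>k<K. b k * rho (2 ^ k * z))))" for z
    have c1: "continuous_on {0..1} F1" unfolding F1_def
      by (intro continuous_intros continuous_on_subset[OF Sfun_cont[OF bsum, unfolded Sfun_def[abs_def]]]) auto
    have c2: "continuous_on {0..1} F2" unfolding F2_def
      by (intro continuous_intros continuous_on_subset[OF rk]) auto
    have "I - IK K = integral {0..1} (\<lambda>z. F1 z - F2 z)"
      unfolding I_def IK_def F1_def[symmetric] F2_def[symmetric]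
      by (rule integral_diff[symmetric]) (intro integrable_continuous_interval c1 c2)+
    also have "norm \<dots> \<le> integral {0..1} (\<lambda>z::real. \<bar>t\<bar> * sqrt 3 * \<delta> K)"
    proof (rule integral_norm_bound_integral)
      show "(\<lambda>z. F1 z - F2 z) integrable_on {0..1}"
        by (intro integrable_continuous_interval continuous_intros c1 c2)
      show "(\<lambda>z::real. \<bar>t\<bar> * sqrt 3 * \<delta> K) integrable_on {0..1}" by (rule integrable_const_ivl)
      fix z :: real
      have "norm (F1 z - F2 z)
          \<le> \<bar>t * (sqrt 3 * (\<Sum>k. b k * rho (2 ^ k * z))) - t * (sqrt 3 * (\<Sum>k<K. b k * rho (2 ^ k * z)))\<bar>"
        unfolding F1_def F2_def by (rule norm_iexp_diff)
      also have "\<dots> = \<bar>t\<bar> * sqrt 3 * \<bar>(\<Sum>k. b k * rho (2^k * z)) - (\<Sum>k<K. b k * rho (2^k * z))\<bar>"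
      proof -
        have "t * (sqrt 3 * (\<Sum>k. b k * rho (2 ^ k * z))) - t * (sqrt 3 * (\<Sum>k<K. b k * rho (2 ^ k * z)))
            = (t * sqrt 3) * ((\<Sum>k. b k * rho (2^k * z)) - (\<Sum>k<K. b k * rho (2^k * z)))"
          by (simp add: algebra_simps)
        then show ?thesis by (simp add: abs_mult)
      qed
      also have "\<dots> \<le> \<bar>t\<bar> * sqrt 3 * \<delta> K" by (intro mult_left_mono tail) auto
      finally show "norm (F1 z - F2 z) \<le> \<bar>t\<bar> * sqrt 3 * \<delta> K" .
    qed
    finally have "norm (I - IK K) \<le> integral {0..1} (\<lambda>z::real. \<bar>t\<bar> * sqrt 3 * \<delta> K)" .
    then have a: "norm (I - IK K) \<le> \<bar>t\<bar> * sqrt 3 * \<delta> K" by simp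
    have b: "norm (IK K - e) \<le> exp (3 * t^2 / 2) * (6 * sqrt 3 * \<bar>t\<bar>^3 * m
          + (t^2 / 2) * (m / 2 + (144 * m^2 + (\<tau> K)^2) / (2 * m)))"
      unfolding IK_def e_def \<tau>_def by (rule fin_bound[OF _ m0 bsK]) (use bm in auto)
    show ?thesis unfolding g_def using norm_triangle_le[OF add_mono[OF a b]] by simp
  qed
  have "g \<longlonglongrightarrow> \<bar>t\<bar> * sqrt 3 * 0 + exp (3 * t^2 / 2) * (6 * sqrt 3 * \<bar>t\<bar>^3 * m
          + (t^2 / 2) * (m / 2 + (144 * m^2 + 0^2) / (2 * m)))"
  proof -
    have d: "\<delta> \<longlonglongrightarrow> 0"
      unfolding \<delta>_def using tendsto_diff[OF tendsto_const summable_LIMSEQ[OF bsum], of "\<Sum>k. \<bar>b k\<bar>"] by simp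
    have tt: "\<tau> \<longlonglongrightarrow> 0"
      unfolding \<tau>_def using tendsto_diff[OF tendsto_const summable_LIMSEQ[OF bsq], of 1] b1 by simp
    show ?thesis unfolding g_def by (intro tendsto_intros d tt) (use m0 in auto)
  qed
  then have "norm (I - e) \<le> \<bar>t\<bar> * sqrt 3 * 0 + exp (3 * t^2 / 2) * (6 * sqrt 3 * \<bar>t\<bar>^3 * m
          + (t^2 / 2) * (m / 2 + (144 * m^2 + 0^2) / (2 * m)))"
    by (rule LIMSEQ_le_const) (use step in auto)
  then show ?thesis unfolding I_def e_def by simp
qed

lemma char_bound:
  assumes "summable (\<lambda>k. \<bar>b k\<bar>)" "(\<Sum>k. (b k)^2) = 1" "m > 0" "\<forall>k. \<bar>b k\<bar> \<le> m"
  shows "norm (integral {0..1} (\<lambda>z. iexp (t * Sfun b z)) - complex_of_real (exp (- (t^2) / 2))) \<le> Kt t * m"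
proof -
  have "norm (integral {0..1} (\<lambda>z. iexp (t * Sfun b z)) - complex_of_real (exp (- (t^2) / 2)))
    \<le> exp (3 * t^2 / 2) * (6 * sqrt 3 * \<bar>t\<bar>^3 * m + (t^2 / 2) * (m / 2 + (144 * m^2 + 0^2) / (2 * m)))"
    unfolding Sfun_def by (rule char_bound_main[OF assms])
  also have "\<dots> \<le> Kt t * m"
  proof -
    have "(t^2 / 2) * (m / 2 + (144 * m^2 + 0^2) / (2 * m)) = (145/4) * t^2 * m"
      using assms(3) by (simp add: field_simps power2_eq_square)
    also have "\<dots> \<le> 37 * t^2 * m" using assms(3) by (intro mult_right_mono) auto
    finally have "exp (3 * t^2 / 2) * (6 * sqrt 3 * \<bar>t\<bar>^3 * m + (t^2 / 2) * (m / 2 + (144 * m^2 + 0^2) / (2 * m)))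
        \<le> exp (3 * t^2 / 2) * (6 * sqrt 3 * \<bar>t\<bar>^3 * m + 37 * t^2 * m)"
      by (intro mult_left_mono add_left_mono) auto
    also have "\<dots> = Kt t * m" unfolding Kt_def by (simp add: algebra_simps)
    finally show ?thesis .
  qed
  finally show ?thesis .
qed

lemma expr_eq:
  fixes c :: "nat \<Rightarrow> real"
  assumes c: "summable (\<lambda>n. \<bar>c n\<bar>)" and N: "N \<ge> 1" and s: "(\<Sum>n. (c (n + N))\<^sup>2) > 0"
  shows "((\<Sum>n. c (n + 1) * tent_iter (n + 1) x)
             - (\<Sum>n\<in>{1..<N}. c n * tent_iter n x)
             - (1/2) * (\<Sum>n. c (n + N)))
          / sqrt ((1/12) * (\<Sum>n. (c (n + N))\<^sup>2))
        = - Sfun (\<lambda>k. c (k + N) / sqrt (\<Sum>n. (c (n + N))\<^sup>2)) (2^(N-1) * x)"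
proof -
  define s where "s = (\<Sum>n. (c (n + N))\<^sup>2)"
  define y where "y = 2^(N-1) * x"
  have sp: "s > 0" using s by (simp add: s_def)
  define a where "a n = c (n + 1) * tent (2^n * x)" for n
  have cN: "summable (\<lambda>n. \<bar>c (n + k)\<bar>)" for k
    using summable_ignore_initial_segment[OF c, of k] by simp
  have sa: "summable a"
  proof (rule summable_comparison_test[OF _ cN[of 1]])
    show "\<exists>N. \<forall>n\<ge>N. norm (a n) \<le> \<bar>c (n + 1)\<bar>"
      using tent_bounds by (auto simp: a_def abs_mult intro!: mult_left_le)
  qed
  have e1: "(\<Sum>n. c (n + 1) * tent_iter (n + 1) x) = suminf a"
    unfolding a_def by (simp add: tent_iter_eq)
  have e2: "suminf a = (\<Sum>n. a (n + (N - 1))) + (\<Sum>i<N - 1. a i)"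
    by (rule suminf_split_initial_segment[OF sa])
  have e3: "(\<Sum>i<N - 1. a i) = (\<Sum>n\<in>{1..<N}. c n * tent_iter n x)"
  proof -
    have "(\<Sum>n\<in>{1..<N}. c n * tent_iter n x) = (\<Sum>n\<in>{Suc 0..<Suc (N-1)}. c n * tent_iter n x)"
      using N by simp
    also have "\<dots> = (\<Sum>n\<in>{0..<N-1}. c (Suc n) * tent_iter (Suc n) x)"
      by (rule sum.shift_bounds_Suc_ivl)
    also have "\<dots> = (\<Sum>i<N - 1. a i)"
      by (simp add: a_def tent_iter_eq atLeast0LessThan)
    finally show ?thesis by simp
  qed
  have e4: "a (n + (N - 1)) = c (n + N) * tent (2^n * y)" for n
  proof -
    have "(2::real)^(n + (N-1)) = 2^n * 2^(N-1)" by (simp add: power_add)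
    then show ?thesis using N by (simp add: a_def y_def mult.assoc)
  qed
  have sc: "summable (\<lambda>n. c (n + N))" using cN[of N] by (rule summable_rabs_cancel)
  have st: "summable (\<lambda>n. c (n + N) * tent (2^n * y))"
  proof (rule summable_comparison_test[OF _ cN[of N]])
    show "\<exists>M. \<forall>n\<ge>M. norm (c (n + N) * tent (2^n * y)) \<le> \<bar>c (n + N)\<bar>"
      using tent_bounds by (auto simp: abs_mult intro!: mult_left_le)
  qed
  have sr: "summable (\<lambda>n. c (n + N) * rho (2^n * y))"
    using summable_rho_terms[OF cN[of N]] by simp
  have num: "(\<Sum>n. c (n + 1) * tent_iter (n + 1) x) - (\<Sum>n\<in>{1..<N}. c n * tent_iter n x)
             - (1/2) * (\<Sum>n. c (n + N)) = - (1/2) * (\<Sum>n. c (n + N) * rho (2^n * y))"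
  proof -
    have "(\<Sum>n. c (n + 1) * tent_iter (n + 1) x) - (\<Sum>n\<in>{1..<N}. c n * tent_iter n x)
        = (\<Sum>n. c (n + N) * tent (2^n * y))"
      using e1 e2 e3 e4 by simp
    moreover have "(\<Sum>n. c (n + N) * tent (2^n * y)) - (1/2) * (\<Sum>n. c (n + N))
        = (\<Sum>n. c (n + N) * tent (2^n * y) - (1/2) * c (n + N))"
      using sums_unique[OF sums_diff[OF summable_sums[OF st] sums_mult[OF summable_sums[OF sc], of "1/2"]]]
      by simp
    moreover have "(\<Sum>n. c (n + N) * tent (2^n * y) - (1/2) * c (n + N))
        = (\<Sum>n. - (1/2) * (c (n + N) * rho (2^n * y)))"
      by (simp add: rho_def algebra_simps)
    moreover have "\<dots> = - (1/2) * (\<Sum>n. c (n + N) * rho (2^n * y))"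
      using sums_unique[OF sums_mult[OF summable_sums[OF sr], of "-1/2"]] by simp
    ultimately show ?thesis by simp
  qed
  have den: "sqrt ((1/12) * s) = sqrt s / (2 * sqrt 3)"
  proof -
    have "sqrt 12 = 2 * sqrt (3::real)"
      using real_sqrt_mult[of 4 3] by simp
    then show ?thesis by (simp add: real_sqrt_mult real_sqrt_divide)
  qed
  have rhs: "Sfun (\<lambda>k. c (k + N) / sqrt s) y = sqrt 3 / sqrt s * (\<Sum>n. c (n + N) * rho (2^n * y))"
  proof -
    have "(\<Sum>k. c (k + N) / sqrt s * rho (2^k * y)) = (\<Sum>k. c (k + N) * rho (2^k * y)) / sqrt s"
      using sr by (subst suminf_divide[symmetric]) (auto simp: algebra_simps)
    then show ?thesis unfolding Sfun_def by simp
  qed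
  show ?thesis
    unfolding num s_def[symmetric] y_def[symmetric] den rhs
    using sp by (simp add: field_simps)
qed

lemma tail_mono:
  fixes c :: "nat \<Rightarrow> real"
  assumes "summable (\<lambda>n. (c n)\<^sup>2)"
  shows "(\<Sum>n. (c (n + (k + N)))\<^sup>2) \<le> (\<Sum>n. (c (n + N))\<^sup>2)"
proof -
  have sf: "summable (\<lambda>n. (c (n + N))\<^sup>2)"
    using summable_ignore_initial_segment[OF assms, of N] by simp
  have "(\<Sum>n. (c (n + N))\<^sup>2) = (\<Sum>n. (c (n + k + N))\<^sup>2) + (\<Sum>i<k. (c (i + N))\<^sup>2)"
    using suminf_split_initial_segment[OF sf, of k] by (simp add: add.assoc)
  moreover have "(\<Sum>i<k. (c (i + N))\<^sup>2) \<ge> 0" by (intro sum_nonneg) simp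
  ultimately show ?thesis by (simp add: add.assoc add.commute add.left_commute)
qed

theorem theorem1p1:
  fixes c :: "nat \<Rightarrow> real"
  assumes abs_summable: "summable (\<lambda>n. \<bar>c n\<bar>)"
    and tail_pos: "\<forall>N\<ge>1. (\<Sum>n. (c (n + N))\<^sup>2) > 0"
    and ratio: "(\<lambda>N. (c N)\<^sup>2 / (\<Sum>n. (c (n + N))\<^sup>2)) \<longlonglongrightarrow> 0"
  shows "\<forall>u::real.
    (\<lambda>N. measure lebesgue
        {x \<in> {0..1::real}.
          ((\<Sum>n. c (n + 1) * tent_iter (n + 1) x)
             - (\<Sum>n\<in>{1..<N}. c n * tent_iter n x)
             - (1/2) * (\<Sum>n. c (n + N)))
          / sqrt ((1/12) * (\<Sum>n. (c (n + N))\<^sup>2)) \<le> u})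
    \<longlonglongrightarrow> (LBINT t:{..u}. exp (- (t\<^sup>2) / 2) / sqrt (2 * pi))"
proof -
  define s where "s N = (\<Sum>n. (c (n + N))\<^sup>2)" for N
  define b where "b N k = c (k + N) / sqrt (s N)" for N k
  define F where "F N x = - Sfun (b (Suc N)) (2^N * x)" for N x
  have spos: "s (Suc N) > 0" for N using tail_pos[rule_format, of "Suc N"] by (simp add: s_def)
  have cN: "summable (\<lambda>n. \<bar>c (n + k)\<bar>)" for k
    using summable_ignore_initial_segment[OF abs_summable, of k] by simp
  have bsum: "summable (\<lambda>k. \<bar>b N k\<bar>)" for N
    using summable_divide[OF cN[of N], of "sqrt (s N)"] by (simp add: b_def abs_divide)
  have csq: "summable (\<lambda>n. (c n)\<^sup>2)"
  proof (rule summable_comparison_test[OF _ abs_summable])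
    have lz: "(\<lambda>n. \<bar>c n\<bar>) \<longlonglongrightarrow> 0" by (rule summable_LIMSEQ_zero[OF abs_summable])
    obtain N0 where "\<forall>n\<ge>N0. norm (\<bar>c n\<bar> - 0) < 1" using LIMSEQ_D[OF lz, of 1] by auto
    then have "\<forall>n\<ge>N0. norm ((c n)\<^sup>2) \<le> \<bar>c n\<bar>"
    proof (intro allI impI)
      fix n assume "\<forall>n\<ge>N0. norm (\<bar>c n\<bar> - 0) < 1" "n \<ge> N0"
      then have "\<bar>c n\<bar> < 1" by auto
      then have "\<bar>c n\<bar> * \<bar>c n\<bar> \<le> \<bar>c n\<bar> * 1" by (intro mult_left_mono) auto
      moreover have "norm ((c n)\<^sup>2) = \<bar>c n\<bar> * \<bar>c n\<bar>" by (simp add: power2_eq_square abs_mult)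
      ultimately show "norm ((c n)\<^sup>2) \<le> \<bar>c n\<bar>" by simp
    qed
    then show "\<exists>N. \<forall>n\<ge>N. norm ((c n)\<^sup>2) \<le> \<bar>c n\<bar>" by blast
  qed
  have csqN: "summable (\<lambda>n. (c (n + N))\<^sup>2)" for N
    using summable_ignore_initial_segment[OF csq, of N] by simp
  have bsq: "(\<Sum>k. (b (Suc N) k)\<^sup>2) = 1" for N
  proof -
    have "(\<Sum>k. (b (Suc N) k)\<^sup>2) = (\<Sum>k. (c (k + Suc N))\<^sup>2 / s (Suc N))"
      using spos[of N] by (simp add: b_def power_divide)
    also have "\<dots> = s (Suc N) / s (Suc N)"
      using sums_unique[OF sums_divide[OF summable_sums[OF csqN[of "Suc N"]], of "s (Suc N)"]]
      by (simp add: s_def)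
    finally show ?thesis using spos[of N] by simp
  qed
  have Fcont: "continuous_on UNIV (F N)" for N
    unfolding F_def[abs_def]
    by (intro continuous_intros continuous_on_compose2[OF Sfun_cont[OF bsum]]) auto
  have expr: "((\<Sum>n. c (n + 1) * tent_iter (n + 1) x)
             - (\<Sum>n\<in>{1..<Suc N}. c n * tent_iter n x)
             - (1/2) * (\<Sum>n. c (n + Suc N)))
          / sqrt ((1/12) * (\<Sum>n. (c (n + Suc N))\<^sup>2)) = F N x" for N x
    using expr_eq[OF abs_summable, of "Suc N" x] spos[of N]
    unfolding F_def b_def[abs_def] s_def by simp
  define M where "M N = distr (lebesgue_on {0..1}) borel (F N)" for N
  have P: "prob_space (lebesgue_on {0..1::real})"
    by (rule prob_spaceI) (simp add: emeasure_restrict_space)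
  have meas: "F N \<in> borel_measurable (lebesgue_on {0..1})" for N
    by (rule continuous_imp_measurable_on_sets_lebesgue[OF continuous_on_subset[OF Fcont]]) auto
  have RD: "real_distribution (M N)" for N
    unfolding M_def using prob_space.real_distribution_distr[OF P meas] .
  have cdfM: "cdf (M N) u = measure lebesgue {x \<in> {0..1}. F N x \<le> u}" for N u
  proof -
    have "cdf (M N) u = measure (lebesgue_on {0..1}) (F N -` {..u} \<inter> space (lebesgue_on {0..1}))"
      unfolding cdf_def M_def by (rule measure_distr[OF meas]) simp
    also have "F N -` {..u} \<inter> space (lebesgue_on {0..1}) = {x \<in> {0..1}. F N x \<le> u}"
      by auto
    also have "measure (lebesgue_on {0..1}) {x \<in> {0..1}. F N x \<le> u} = measure lebesgue {x \<in> {0..1}. F N x \<le> u}"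
      by (rule measure_restrict_space) auto
    finally show ?thesis .
  qed
  have charM: "char (M N) t = integral {0..1} (\<lambda>z. iexp ((-t) * Sfun (b (Suc N)) z))" for N t
  proof -
    define g where "g x = iexp (t * F N x)" for x
    have gcont: "continuous_on UNIV g" unfolding g_def by (intro continuous_intros Fcont)
    have gmeas: "g \<in> borel_measurable (lebesgue_on {0..1})"
      by (rule continuous_imp_measurable_on_sets_lebesgue[OF continuous_on_subset[OF gcont]]) auto
    have "char (M N) t = integral\<^sup>L (lebesgue_on {0..1}) g"
      unfolding char_def M_def g_def
      by (rule integral_distr[OF meas]) (intro borel_measurable_continuous_onI continuous_intros)
    also have "\<dots> = integral {0..1} g"
    proof -
      interpret P: prob_space "lebesgue_on {0..1::real}" by (rule P)
      have "integrable (lebesgue_on {0..1}) g"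
        by (rule P.integrable_const_bound[where B=1]) (auto simp: g_def gmeas)
      then have "(g has_integral integral\<^sup>L (lebesgue_on {0..1}) g) {0..1}"
        by (rule has_integral_integral_lebesgue_on) auto
      then show ?thesis by (simp add: integral_unique)
    qed
    also have "\<dots> = integral {0..1} (\<lambda>x. (\<lambda>z. iexp ((-t) * Sfun (b (Suc N)) z)) (2^N * x))"
      unfolding g_def F_def by simp
    also have "\<dots> = integral {0..1} (\<lambda>z. iexp ((-t) * Sfun (b (Suc N)) z))"
    proof (rule inv_int)
      show "continuous_on UNIV (\<lambda>z. iexp (- t * Sfun (b (Suc N)) z))"
        by (intro continuous_intros Sfun_cont[OF bsum])
      show "periodic1 (\<lambda>z. iexp (- t * Sfun (b (Suc N)) z))"
        using Sfun_period unfolding periodic1_def by simp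
    qed
    finally show ?thesis .
  qed
  have conv: "(\<lambda>N. char (M N) t) \<longlonglongrightarrow> char std_normal_distribution t" for t
  proof (rule LIMSEQ_I)
    fix r :: real assume r: "0 < r"
    define K where "K = Kt (-t)"
    have K0: "K \<ge> 0" unfolding K_def Kt_def by (intro mult_nonneg_nonneg) auto
    define e where "e = r / (K + 1)"
    have e0: "e > 0" unfolding e_def using r K0 by simp
    have Ke: "K * e < r" unfolding e_def using r K0 by (simp add: field_simps)
    obtain N1 where N1: "\<forall>n\<ge>N1. norm ((c n)\<^sup>2 / s n - 0) < e^2"
      using LIMSEQ_D[OF ratio[folded s_def], of "e^2"] e0 unfolding s_def by auto
    have bsmall: "\<bar>b (Suc N) k\<bar> \<le> e" if N: "N \<ge> N1" for N k
    proof -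
      define n where "n = k + Suc N"
      have "n \<ge> N1" using N by (simp add: n_def)
      then have "\<bar>(c n)\<^sup>2 / s n\<bar> < e^2" using N1 by auto
      moreover have sn: "s n > 0" using tail_pos[rule_format, of n] by (simp add: s_def n_def)
      ultimately have "(c n)\<^sup>2 < e^2 * s n" by (simp add: divide_less_eq)
      also have "s n \<le> s (Suc N)" unfolding s_def n_def by (rule tail_mono[OF csq])
      then have "e^2 * s n \<le> e^2 * s (Suc N)" by (simp add: mult_left_mono)
      finally have "(c n)\<^sup>2 < e^2 * s (Suc N)" .
      then have "(b (Suc N) k)\<^sup>2 < e^2"
        using spos[of N] by (simp add: b_def power_divide divide_less_eq n_def)
      then show ?thesis using e0 by (metis abs_le_square_iff less_imp_le abs_of_pos)
    qed
    show "\<exists>no. \<forall>n\<ge>no. norm (char (M n) t - char std_normal_distribution t) < r"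
    proof (intro exI allI impI)
      fix N assume N: "N \<ge> N1"
      have "norm (char (M N) t - char std_normal_distribution t)
          = norm (integral {0..1} (\<lambda>z. iexp ((-t) * Sfun (b (Suc N)) z)) - complex_of_real (exp (- ((-t)^2) / 2)))"
        by (simp add: charM char_std_normal_distribution)
      also have "\<dots> \<le> K * e" unfolding K_def
        by (rule char_bound[OF bsum bsq e0]) (use bsmall N in auto)
      also have "\<dots> < r" by (rule Ke)
      finally show "norm (char (M N) t - char std_normal_distribution t) < r" .
    qed
  qed
  have wc: "weak_conv_m M std_normal_distribution"
    by (rule levy_continuity[OF RD real_dist_normal_dist conv])
  interpret std: real_distribution std_normal_distribution by (rule real_dist_normal_dist)
  show ?thesis
  proof
    fix u :: real
    have "measure std_normal_distribution {u} = 0"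
    proof -
      have "measure std_normal_distribution {u} = integral\<^sup>L std_normal_distribution (indicator {u})"
        by simp
      also have "\<dots> = integral\<^sup>L lborel (\<lambda>x. std_normal_density x *\<^sub>R indicator {u} x)"
        by (rule integral_density) auto
      also have "\<dots> = 0"
        by (rule integral_eq_zero_AE) (use AE_lborel_singleton[of u] in \<open>auto elim!: AE_mp\<close>)
      finally show ?thesis .
    qed
    then have ic: "isCont (cdf std_normal_distribution) u" by (simp add: std.isCont_cdf)
    have lim: "(\<lambda>N. cdf (M N) u) \<longlonglongrightarrow> cdf std_normal_distribution u"
      using wc ic unfolding weak_conv_m_def weak_conv_def by blast
    have cdfstd: "cdf std_normal_distribution u = (LBINT t:{..u}. exp (- (t\<^sup>2) / 2) / sqrt (2 * pi))"
    proof -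
      have "cdf std_normal_distribution u = integral\<^sup>L std_normal_distribution (indicator {..u})"
        by (simp add: cdf_def)
      also have "\<dots> = integral\<^sup>L lborel (\<lambda>x. std_normal_density x *\<^sub>R indicator {..u} x)"
        by (rule integral_density) auto
      also have "\<dots> = (LBINT t:{..u}. exp (- (t\<^sup>2) / 2) / sqrt (2 * pi))"
        unfolding set_lebesgue_integral_def
        by (rule Bochner_Integration.integral_cong) (auto simp: std_normal_density_def)
      finally show ?thesis .
    qed
    have "(\<lambda>N. measure lebesgue
        {x \<in> {0..1::real}.
          ((\<Sum>n. c (n + 1) * tent_iter (n + 1) x)
             - (\<Sum>n\<in>{1..<Suc N}. c n * tent_iter n x)
             - (1/2) * (\<Sum>n. c (n + Suc N)))
          / sqrt ((1/12) * (\<Sum>n. (c (n + Suc N))\<^sup>2)) \<le> u})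
      \<longlonglongrightarrow> (LBINT t:{..u}. exp (- (t\<^sup>2) / 2) / sqrt (2 * pi))"
      using lim unfolding expr cdfM cdfstd .
    then show "(\<lambda>N. measure lebesgue
        {x \<in> {0..1::real}.
          ((\<Sum>n. c (n + 1) * tent_iter (n + 1) x)
             - (\<Sum>n\<in>{1..<N}. c n * tent_iter n x)
             - (1/2) * (\<Sum>n. c (n + N)))
          / sqrt ((1/12) * (\<Sum>n. (c (n + N))\<^sup>2)) \<le> u})
      \<longlonglongrightarrow> (LBINT t:{..u}. exp (- (t\<^sup>2) / 2) / sqrt (2 * pi))"
      by (rule LIMSEQ_imp_Suc)
  qed
qed

end
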